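(* Let $\alpha\in\mathbb{N}_0$ and $M\ge0$. (a) For all $y\in C^{(2\alpha+4)}(0,\infty)$ and $x>0$, $$x^2(x^{-1}D_x)^{2\alpha+4}\big[x^{2\alpha+2}y(x)\big]=\Big[D_x^2+\frac{2\alpha+1}{x}D_x-\frac{4\alpha+4}{x^2}\Big]^{\alpha+2}y(x).$$ (b) For every $\lambda\ge0$ the Bessel-type function $J_\lambda^{\alpha,M}$ satisfies, for $x>0$, $$\Big\{\big[\widetilde L_{2,x}^{\alpha}+\lambda^2\big]+\frac{M}{2^{2\alpha+2}(\alpha+2)!}\big[\widetilde L_{2\alpha+4,x}^{\alpha}+\lambda^{2\alpha+4}\big]\Big\}J_\lambda^{\alpha,M}(x)=0.$$ (c) For every $\lambda\ge0$, $\big[\widetilde L_{2\alpha+4,x}^{\alpha}+\lambda^{2\alpha+4}\big]K_\lambda^{\alpha}(x)=0$ for $x>0$.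
   Context: $\widetilde L_{2,x}^{\alpha}y(x)=x^{-2\alpha-1}D_x[x^{2\alpha+1}D_xy(x)]=y''+\frac{2\alpha+1}{x}y'$ and $\widetilde L_{2\alpha+4,x}^{\alpha}y(x)=(-1)^{\alpha+1}x^2(x^{-1}D_x)^{2\alpha+4}[x^{2\alpha+2}y(x)]$, where $(x^{-1}D_x)^k$ is the $k$-fold application of $y\mapsto x^{-1}y'$. For $\gamma>-1$, $\lambda\ge0$: $J_\lambda^{\gamma}(x)={}_0F_1(-;\gamma+1;-\tfrac14(\lambda x)^2)=2^{\gamma}\Gamma(\gamma+1)(\lambda x)^{-\gamma}J_\gamma(\lambda x)$ (normalized Bessel function). The Bessel-type functions are $J_\lambda^{\alpha,M}(x)=J_\lambda^{\alpha}(x)+M K_\lambda^{\alpha}(x)$ with $K_\lambda^{\alpha}(x)=-k_\lambda^{\alpha}x^2J_\lambda^{\alpha+2}(x)$, $k_\lambda^{\alpha}=\frac{(\lambda/2)^{2\alpha+4}}{(\alpha+1)(\alpha+2)!}$. *)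

theory Defs
  imports "HOL-Analysis.Analysis"
begin

definition Cn_on :: "nat \<Rightarrow> real set \<Rightarrow> (real \<Rightarrow> real) \<Rightarrow> bool" where
  "Cn_on n S y \<longleftrightarrow>
     (\<forall>j<n. \<forall>x\<in>S. ((deriv ^^ j) y has_real_derivative (deriv ^^ Suc j) y x) (at x))
     \<and> continuous_on S ((deriv ^^ n) y)"

definition xinvD :: "(real \<Rightarrow> real) \<Rightarrow> (real \<Rightarrow> real)" where
  "xinvD f = (\<lambda>x. deriv f x / x)"

definition L2 :: "nat \<Rightarrow> (real \<Rightarrow> real) \<Rightarrow> (real \<Rightarrow> real)" where
  "L2 \<alpha> y = (\<lambda>x. deriv (deriv y) x + (2 * real \<alpha> + 1) / x * deriv y x)"

(* \<tilde>L_{2\<alpha>+4,x}^\<alpha> y = (-1)^(\<alpha>+1) x^2 (x^{-1}D_x)^{2\<alpha>+4} [x^{2\<alpha>+2} y(x)] *)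
definition Lhigh :: "nat \<Rightarrow> (real \<Rightarrow> real) \<Rightarrow> (real \<Rightarrow> real)" where
  "Lhigh \<alpha> y = (\<lambda>x. (-1) ^ (\<alpha> + 1) * x ^ 2 *
      (xinvD ^^ (2 * \<alpha> + 4)) (\<lambda>t. t ^ (2 * \<alpha> + 2) * y t) x)"

definition Bop :: "nat \<Rightarrow> (real \<Rightarrow> real) \<Rightarrow> (real \<Rightarrow> real)" where
  "Bop \<alpha> y = (\<lambda>x. deriv (deriv y) x + (2 * real \<alpha> + 1) / x * deriv y x
                    - (4 * real \<alpha> + 4) / x ^ 2 * y x)"

definition hyp0F1 :: "real \<Rightarrow> real \<Rightarrow> real" where
  "hyp0F1 b z = (\<Sum>k. z ^ k / (pochhammer b k * fact k))"

definition besselJ :: "real \<Rightarrow> real \<Rightarrow> real \<Rightarrow> real" where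
  "besselJ \<gamma> lam x = hyp0F1 (\<gamma> + 1) (- ((lam * x) ^ 2) / 4)"

definition kconst :: "nat \<Rightarrow> real \<Rightarrow> real" where
  "kconst \<alpha> lam = (lam / 2) ^ (2 * \<alpha> + 4) / ((real \<alpha> + 1) * fact (\<alpha> + 2))"

definition besselK :: "nat \<Rightarrow> real \<Rightarrow> real \<Rightarrow> real" where
  "besselK \<alpha> lam x = - kconst \<alpha> lam * x ^ 2 * besselJ (real \<alpha> + 2) lam x"

definition besselJM :: "nat \<Rightarrow> real \<Rightarrow> real \<Rightarrow> real \<Rightarrow> real" where
  "besselJM \<alpha> M lam x = besselJ (real \<alpha>) lam x + M * besselK \<alpha> lam x"

end

theory Submission
  imports Defs
begin


fun Ck :: "nat \<Rightarrow> (real \<Rightarrow> real) \<Rightarrow> bool" where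
  "Ck 0 g = True"
| "Ck (Suc k) g = ((\<forall>x>0. g differentiable (at x)) \<and> Ck k (deriv g))"

lemma ev_pos: "(x::real) > 0 \<Longrightarrow> eventually (\<lambda>t. t > 0) (nhds x)"
  by (simp add: eventually_nhds_in_open[of "{0<..}", simplified])

lemma deriv_eq_on:
  assumes "\<forall>t>0. g t = h t" "(x::real) > 0"
  shows "deriv g x = deriv h x"
proof (rule deriv_cong_ev[OF _ refl])
  show "\<forall>\<^sub>F t in nhds x. g t = h t"
    using ev_pos[OF assms(2)] by eventually_elim (use assms in auto)
qed

lemma differentiable_eq_on:
  fixes g h :: "real \<Rightarrow> real"
  assumes "\<forall>t>0. g t = h t" "(x::real) > 0" "g differentiable (at x)"
  shows "h differentiable (at x)"
proof -
  from assms(3) have "(g has_real_derivative deriv g x) (at x)"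
    using DERIV_deriv_iff_real_differentiable by blast
  then have "(h has_real_derivative deriv g x) (at x)"
    by (rule has_field_derivative_transform_within_open[of _ _ _ "{0<..}"]) (use assms in auto)
  then show ?thesis using real_differentiable_def by blast
qed

lemma Ck_cong: "Ck k g \<Longrightarrow> \<forall>t>0. g t = h t \<Longrightarrow> Ck k h"
proof (induction k arbitrary: g h)
  case 0 then show ?case by simp
next
  case (Suc k)
  have "\<forall>t>0. deriv g t = deriv h t" using deriv_eq_on Suc.prems(2) by blast
  then show ?case using Suc.prems Suc.IH[of "deriv g" "deriv h"] differentiable_eq_on[OF Suc.prems(2)] by auto
qed

lemma Ck_mono: "Ck (Suc k) g \<Longrightarrow> Ck k g"
  by (induction k arbitrary: g) auto

lemma Ck_mono': "Ck (m + k) g \<Longrightarrow> Ck k g"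
proof (induction m)
  case (Suc m)
  then show ?case using Ck_mono[of "m+k" g] by simp
qed simp

lemma Dd: "(f::real\<Rightarrow>real) differentiable (at x) \<Longrightarrow> (f has_real_derivative deriv f x) (at x)"
  using DERIV_deriv_iff_real_differentiable by blast

lemma Ck_add: "Ck k f \<Longrightarrow> Ck k g \<Longrightarrow> Ck k (\<lambda>x. f x + g x)"
proof (induction k arbitrary: f g)
  case 0 then show ?case by simp
next
  case (Suc k)
  have fd: "\<forall>x>0. f differentiable (at x)" and f1: "Ck k (deriv f)" using Suc.prems(1) by simp_all
  have gd: "\<forall>x>0. g differentiable (at x)" and g1: "Ck k (deriv g)" using Suc.prems(2) by simp_all
  have d: "((\<lambda>x. f x + g x) has_real_derivative (deriv f t + deriv g t)) (at t)" if "t > 0" for t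
    using fd gd that by (intro DERIV_add Dd) auto
  have e: "\<forall>t>0. deriv f t + deriv g t = deriv (\<lambda>x. f x + g x) t"
    using DERIV_imp_deriv[OF d] by simp
  have "Ck k (\<lambda>t. deriv f t + deriv g t)" by (rule Suc.IH[OF f1 g1])
  then have c: "Ck k (deriv (\<lambda>x. f x + g x))" using e by (rule Ck_cong)
  have "\<forall>t>0. (\<lambda>x. f x + g x) differentiable (at t)" using d real_differentiable_def by blast
  then show ?case using c by simp
qed

lemma Ck_mult: "Ck k f \<Longrightarrow> Ck k g \<Longrightarrow> Ck k (\<lambda>x. f x * g x)"
proof (induction k arbitrary: f g)
  case 0 then show ?case by simp
next
  case (Suc k)
  have fd: "\<forall>x>0. f differentiable (at x)" and f1: "Ck k (deriv f)" using Suc.prems(1) by simp_all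
  have gd: "\<forall>x>0. g differentiable (at x)" and g1: "Ck k (deriv g)" using Suc.prems(2) by simp_all
  have f0: "Ck k f" by (rule Ck_mono[OF Suc.prems(1)])
  have g0: "Ck k g" by (rule Ck_mono[OF Suc.prems(2)])
  have d: "((\<lambda>x. f x * g x) has_real_derivative (deriv f t * g t + deriv g t * f t)) (at t)" if "t > 0" for t
    using fd gd that by (intro DERIV_mult Dd) auto
  have e: "\<forall>t>0. deriv f t * g t + f t * deriv g t = deriv (\<lambda>x. f x * g x) t"
    using DERIV_imp_deriv[OF d] by (simp add: mult.commute)
  have "Ck k (\<lambda>t. deriv f t * g t + f t * deriv g t)"
    by (rule Ck_add[OF Suc.IH[OF f1 g0] Suc.IH[OF f0 g1]])
  then have c: "Ck k (deriv (\<lambda>x. f x * g x))" using e by (rule Ck_cong)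
  have "\<forall>t>0. (\<lambda>x. f x * g x) differentiable (at t)" using d real_differentiable_def by blast
  then show ?case using c by simp
qed

lemma Ck_const: "Ck k (\<lambda>x. c)"
proof (induction k arbitrary: c)
  case (Suc k) then show ?case by simp
qed simp

lemma Ck_id: "Ck k (\<lambda>x. x)"
proof (cases k)
  case (Suc k') then show ?thesis using Ck_const by simp
qed simp

lemma Ck_pow: "Ck k (\<lambda>x. x ^ m)"
proof (induction m)
  case 0 then show ?case using Ck_const by simp
next
  case (Suc m) then show ?case using Ck_mult[OF Ck_id] by simp
qed

lemma Ck_scale: "Ck k g \<Longrightarrow> Ck k (\<lambda>x. c * g x)"
  using Ck_mult[OF Ck_const] by blast

lemma Ck_diff: "Ck k f \<Longrightarrow> Ck k g \<Longrightarrow> Ck k (\<lambda>x. f x - g x)"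
  using Ck_add[of k f "\<lambda>x. (-1) * g x"] Ck_scale[of k g "-1"] by simp

lemma inv_pow_deriv: "(x::real) > 0 \<Longrightarrow>
   ((\<lambda>t. inverse t ^ m) has_real_derivative (- real m * inverse x ^ Suc m)) (at x)"
proof -
  assume x: "x > 0"
  have d: "((\<lambda>t. inverse t ^ m) has_real_derivative
      of_nat m * (- (inverse x ^ Suc (Suc 0)) * inverse x ^ (m - Suc 0))) (at x)"
    using x by (intro DERIV_power DERIV_inverse) simp
  have e: "of_nat m * (- (inverse x ^ Suc (Suc 0)) * inverse x ^ (m - Suc 0)) = - real m * inverse x ^ Suc m"
    by (cases m) (simp_all add: power_Suc algebra_simps)
  show ?thesis unfolding e[symmetric] by (rule d)
qed

lemma Ck_inv: "Ck k (\<lambda>x. c * inverse x ^ m)"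
proof (induction k arbitrary: c m)
  case 0 then show ?case by simp
next
  case (Suc k)
  have d: "((\<lambda>x. c * inverse x ^ m) has_real_derivative (c * (- real m * inverse t ^ Suc m))) (at t)" if "t > 0" for t
    using that by (intro DERIV_cmult inv_pow_deriv)
  have "Ck k (\<lambda>t. (c * (- real m)) * inverse t ^ Suc m)" by (rule Suc.IH)
  then have "Ck k (deriv (\<lambda>x. c * inverse x ^ m))"
    by (rule Ck_cong) (use DERIV_imp_deriv[OF d] in auto)
  then show ?case using d real_differentiable_def by auto
qed

definition E :: "real \<Rightarrow> (real \<Rightarrow> real) \<Rightarrow> (real \<Rightarrow> real)" where
  "E c g = (\<lambda>x. x * deriv g x - c * g x)"

fun P :: "real list \<Rightarrow> (real \<Rightarrow> real) \<Rightarrow> (real \<Rightarrow> real)" where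
  "P [] g = g"
| "P (c # cs) g = E c (P cs g)"

lemma Ck_E: "Ck (Suc k) g \<Longrightarrow> Ck k (E c g)"
proof -
  assume g: "Ck (Suc k) g"
  have g1: "Ck k (deriv g)" using g by simp
  have g0: "Ck k g" by (rule Ck_mono[OF g])
  show ?thesis unfolding E_def by (intro Ck_diff Ck_mult Ck_id Ck_scale g0 g1)
qed

lemma Ck_T: "Ck (Suc k) g \<Longrightarrow> Ck k (xinvD g)"
proof -
  assume g: "Ck (Suc k) g"
  have "Ck k (\<lambda>x. deriv g x * (1 * inverse x ^ 1))"
    using g by (intro Ck_mult Ck_inv) auto
  then show ?thesis by (rule Ck_cong) (auto simp: xinvD_def field_simps)
qed

lemma Ck_P: "Ck (length cs + k) g \<Longrightarrow> Ck k (P cs g)"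
proof (induction cs arbitrary: k)
  case (Cons c cs)
  then show ?case using Ck_E[of k] Cons.IH[of "Suc k"] by simp
qed simp

lemma E_deriv:
  assumes "Ck 2 g" "(x::real) > 0"
  shows "(E d g has_real_derivative (deriv g x + x * deriv (deriv g) x - d * deriv g x)) (at x)"
proof -
  have g1: "g differentiable (at x)" and g2: "deriv g differentiable (at x)"
    using assms by (auto simp: numeral_2_eq_2)
  have a: "((\<lambda>x. x * deriv g x) has_real_derivative (1 * deriv g x + deriv (deriv g) x * x)) (at x)"
    by (rule DERIV_mult[OF DERIV_ident Dd[OF g2]])
  have b: "((\<lambda>x. d * g x) has_real_derivative d * deriv g x) (at x)"
    by (rule DERIV_cmult[OF Dd[OF g1]])
  have "((\<lambda>x. x * deriv g x - d * g x) has_real_derivative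
     (1 * deriv g x + deriv (deriv g) x * x - d * deriv g x)) (at x)"
    by (rule DERIV_diff[OF a b])
  then show ?thesis unfolding E_def by (simp add: mult.commute)
qed

lemma E_comm:
  assumes "Ck 2 g" "(x::real) > 0"
  shows "E c (E d g) x = E d (E c g) x"
proof -
  have 1: "E c (E d g) x = x * (deriv g x + x * deriv (deriv g) x - d * deriv g x) - c * (x * deriv g x - d * g x)"
    unfolding E_def[of c "E d g"] DERIV_imp_deriv[OF E_deriv[OF assms, of d]] by (simp add: E_def)
  have 2: "E d (E c g) x = x * (deriv g x + x * deriv (deriv g) x - c * deriv g x) - d * (x * deriv g x - c * g x)"
    unfolding E_def[of d "E c g"] DERIV_imp_deriv[OF E_deriv[OF assms, of c]] by (simp add: E_def)
  show ?thesis unfolding 1 2 by (simp add: algebra_simps)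
qed

lemma E_cong: "\<forall>t>0. g t = h t \<Longrightarrow> \<forall>t>0. E c g t = E c h t"
proof (intro allI impI)
  fix t :: real assume a: "\<forall>t>0. g t = h t" and t: "t > 0"
  show "E c g t = E c h t" using deriv_eq_on[OF a t] a t by (simp add: E_def)
qed

lemma P_cong: "\<forall>t>0. g t = h t \<Longrightarrow> \<forall>t>0. P cs g t = P cs h t"
proof (induction cs)
  case (Cons c cs) then show ?case using E_cong[of "P cs g" "P cs h" c] by simp
qed simp

lemma P_move:
  "Ck (length (ds1 @ c # ds2)) g \<Longrightarrow> \<forall>x>0. P (ds1 @ c # ds2) g x = P (c # ds1 @ ds2) g x"
proof (induction ds1)
  case Nil then show ?case by simp
next
  case (Cons d ds1)
  let ?h = "P (ds1 @ ds2) g"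
  have ih: "\<forall>x>0. P (ds1 @ c # ds2) g x = E c ?h x"
    using Cons.IH Cons.prems Ck_mono[of "length (ds1 @ c # ds2)" g] by simp
  have ck: "Ck 2 ?h"
    using Ck_P[of "ds1 @ ds2" 2 g] Cons.prems by (simp add: add.commute)
  show ?case
  proof (intro allI impI)
    fix x :: real assume x: "x > 0"
    have "P ((d # ds1) @ c # ds2) g x = E d (P (ds1 @ c # ds2) g) x" by simp
    also have "\<dots> = E d (E c ?h) x" using E_cong[OF ih] x by blast
    also have "\<dots> = E c (E d ?h) x" using E_comm[OF ck x] by simp
    finally show "P ((d # ds1) @ c # ds2) g x = P (c # (d # ds1) @ ds2) g x" by simp
  qed
qed

lemma P_perm:
  "mset cs = mset ds \<Longrightarrow> Ck (length cs) g \<Longrightarrow> \<forall>x>0. P cs g x = P ds g x"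
proof (induction cs arbitrary: ds)
  case Nil then show ?case by simp
next
  case (Cons c cs)
  have "c \<in> set ds" using Cons.prems(1) by (metis list.set_intros(1) set_mset_mset)
  then obtain ds1 ds2 where ds: "ds = ds1 @ c # ds2" by (meson split_list)
  have m: "mset cs = mset (ds1 @ ds2)" using Cons.prems(1) ds by simp
  have len: "length ds = length (c # cs)" using Cons.prems(1) by (metis size_mset)
  have ih: "\<forall>x>0. P cs g x = P (ds1 @ ds2) g x"
    using Cons.IH[OF m] Cons.prems(2) Ck_mono[of "length cs" g] by simp
  have mv: "\<forall>x>0. P ds g x = P (c # ds1 @ ds2) g x"
    using P_move[of ds1 c ds2 g] ds len Cons.prems(2) by simp
  show ?case using E_cong[OF ih, of c] mv by simp
qed

fun TL :: "nat \<Rightarrow> real list" where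
  "TL 0 = []"
| "TL (Suc m) = 2 * real m # TL m"

lemma length_TL [simp]: "length (TL m) = m"
  by (induction m) auto

lemma T_pow: "Ck m g \<Longrightarrow> \<forall>x>0. (xinvD ^^ m) g x = P (TL m) g x / x ^ (2 * m)"
proof (induction m)
  case 0 then show ?case by simp
next
  case (Suc m)
  let ?Q = "P (TL m) g"
  have ck: "Ck 1 ?Q" using Ck_P[of "TL m" 1 g] Suc.prems by simp
  have ih: "\<forall>t>0. (xinvD ^^ m) g t = ?Q t * inverse t ^ (2 * m)"
    using Suc.IH Ck_mono[OF Suc.prems] by (simp add: divide_inverse power_inverse)
  show ?case
  proof (intro allI impI)
    fix x :: real assume x: "x > 0"
    have q1: "?Q differentiable (at x)" using ck x by simp
    have d: "((\<lambda>t. ?Q t * inverse t ^ (2 * m)) has_real_derivative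
         (deriv ?Q x * inverse x ^ (2 * m) + (- real (2 * m) * inverse x ^ Suc (2 * m)) * ?Q x)) (at x)"
      by (rule DERIV_mult Dd[OF q1] inv_pow_deriv x)+
    have "(xinvD ^^ Suc m) g x = deriv ((xinvD ^^ m) g) x / x" by (simp add: xinvD_def)
    also have "\<dots> = deriv (\<lambda>t. ?Q t * inverse t ^ (2 * m)) x / x"
      using deriv_eq_on[OF ih x] by simp
    also have "\<dots> = (deriv ?Q x * inverse x ^ (2 * m) + (- real (2 * m) * inverse x ^ Suc (2 * m)) * ?Q x) / x"
      using DERIV_imp_deriv[OF d] by simp
    also have "\<dots> = P (TL (Suc m)) g x / x ^ (2 * Suc m)"
      using x by (simp add: E_def field_simps power_Suc2)
    finally show "(xinvD ^^ Suc m) g x = P (TL (Suc m)) g x / x ^ (2 * Suc m)" .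
  qed
qed

lemma E_mulpow:
  assumes "h differentiable (at x)" "(x::real) > 0"
  shows "E c (\<lambda>t. t ^ a * h t) x = x ^ a * E (c - real a) h x"
proof -
  have d: "((\<lambda>t. t ^ a * h t) has_real_derivative (real a * x ^ (a - Suc 0) * h x + deriv h x * x ^ a)) (at x)"
    by (rule DERIV_mult DERIV_pow Dd[OF assms(1)])+
  have e: "x * (real a * x ^ (a - Suc 0)) = real a * x ^ a" by (cases a) auto
  show ?thesis using DERIV_imp_deriv[OF d] e unfolding E_def by (simp add: algebra_simps; blast)
qed

lemma P_shift: "Ck (length cs) h \<Longrightarrow>
  \<forall>x>0. P cs (\<lambda>t. t ^ a * h t) x = x ^ a * P (map (\<lambda>c. c - real a) cs) h x"
proof (induction cs)
  case Nil then show ?case by simp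
next
  case (Cons c cs)
  have ih: "\<forall>x>0. P cs (\<lambda>t. t ^ a * h t) x = x ^ a * P (map (\<lambda>c. c - real a) cs) h x"
    using Cons Ck_mono[of "length cs" h] by simp
  have ck: "Ck 1 (P (map (\<lambda>c. c - real a) cs) h)"
    using Ck_P[of "map (\<lambda>c. c - real a) cs" 1 h] Cons.prems by simp
  show ?case using E_cong[OF ih, of c] E_mulpow[of "P (map (\<lambda>c. c - real a) cs) h"] ck by simp
qed



fun BL :: "nat \<Rightarrow> nat \<Rightarrow> real list" where
  "BL a 0 = []"
| "BL a (Suc m) = (2 * real m - 2 * real a - 2) # (2 * real m + 2) # BL a m"

lemma length_BL [simp]: "length (BL a m) = 2 * m"
  by (induction m) auto

lemma alg: fixes x u q0 q1 q2 M a :: real assumes "x \<noteq> 0"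
 shows "q2*u + (- (2*M) * (u/x)) * q1 + ((- (2*M)) * (- (2*M+1)) * (u/x^2)) * q0 + q1 * (-(2*M)*(u/x))
   + (2*a+1)/x*(q1*u + (-(2*M)*(u/x))*q0) - (4*a+4)/x^2*(q0*u)
   = (x*(q1 + x*q2 - (2*M+2)*q1) - (2*M-2*a-2)*(x*q1 - (2*M+2)*q0)) * (u / x^2)"
  using assms by (simp add: field_simps power2_eq_square)

lemma Bop_pow: "Ck (2 * m) y \<Longrightarrow> \<forall>x>0. (Bop \<alpha> ^^ m) y x = P (BL \<alpha> m) y x / x ^ (2 * m)"
proof (induction m)
  case 0 then show ?case by simp
next
  case (Suc m)
  let ?Q = "P (BL \<alpha> m) y"
  let ?h = "(Bop \<alpha> ^^ m) y"
  have ck: "Ck 2 ?Q" using Ck_P[of "BL \<alpha> m" 2 y] Suc.prems by (simp add: add.commute)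
  have q1: "\<forall>x>0. ?Q differentiable (at x)" and q2: "\<forall>x>0. deriv ?Q differentiable (at x)"
    using ck by (simp_all add: numeral_2_eq_2)
  have ih: "\<forall>t>0. ?h t = ?Q t * inverse t ^ (2 * m)"
    using Suc.IH Ck_mono'[of 2 "2 * m" y] Suc.prems by (simp add: divide_inverse power_inverse)
  let ?h1 = "\<lambda>t. deriv ?Q t * inverse t ^ (2 * m) + (- real (2 * m) * inverse t ^ Suc (2 * m)) * ?Q t"
  have dh: "\<forall>t>0. deriv ?h t = ?h1 t"
  proof (intro allI impI)
    fix t :: real assume t: "t > 0"
    have "((\<lambda>t. ?Q t * inverse t ^ (2 * m)) has_real_derivative ?h1 t) (at t)"
      by (rule DERIV_mult[OF Dd inv_pow_deriv]) (use q1 t in auto)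
    then show "deriv ?h t = ?h1 t" using deriv_eq_on[OF ih t] DERIV_imp_deriv by simp
  qed
  show ?case
  proof (intro allI impI)
    fix x :: real assume x: "x > 0"
    have d1: "((\<lambda>t. deriv ?Q t * inverse t ^ (2 * m)) has_real_derivative
        (deriv (deriv ?Q) x * inverse x ^ (2 * m) + (- real (2 * m) * inverse x ^ Suc (2 * m)) * deriv ?Q x)) (at x)"
      by (rule DERIV_mult[OF Dd inv_pow_deriv]) (use q2 x in auto)
    have d2: "((\<lambda>t. (- real (2 * m) * inverse t ^ Suc (2 * m)) * ?Q t) has_real_derivative
        ((- real (2 * m) * (- real (Suc (2 * m)) * inverse x ^ Suc (Suc (2 * m)))) * ?Q x
         + deriv ?Q x * (- real (2 * m) * inverse x ^ Suc (2 * m)))) (at x)"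
      by (rule DERIV_mult[OF DERIV_cmult[OF inv_pow_deriv] Dd]) (use q1 x in auto)
    have ddh: "deriv (deriv ?h) x = deriv (deriv ?Q) x * inverse x ^ (2 * m) + (- real (2 * m) * inverse x ^ Suc (2 * m)) * deriv ?Q x
        + ((- real (2 * m) * (- real (Suc (2 * m)) * inverse x ^ Suc (Suc (2 * m)))) * ?Q x
         + deriv ?Q x * (- real (2 * m) * inverse x ^ Suc (2 * m)))"
      using deriv_eq_on[OF dh x] DERIV_imp_deriv[OF DERIV_add[OF d1 d2]] by simp
    let ?c = "2 * real m - 2 * real \<alpha> - 2" and ?d = "2 * real m + 2"
    have ee: "E ?c (E ?d ?Q) x = x * (deriv ?Q x + x * deriv (deriv ?Q) x - ?d * deriv ?Q x) - ?c * (x * deriv ?Q x - ?d * ?Q x)"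
      unfolding E_def[of ?c "E ?d ?Q"] DERIV_imp_deriv[OF E_deriv[OF ck x, of ?d]] by (simp add: E_def)
    have "(Bop \<alpha> ^^ Suc m) y x = Bop \<alpha> ?h x" by simp
    also have "\<dots> = deriv (deriv ?h) x + (2 * real \<alpha> + 1) / x * deriv ?h x - (4 * real \<alpha> + 4) / x ^ 2 * ?h x"
      by (simp add: Bop_def)
    also have "\<dots> = E ?c (E ?d ?Q) x / x ^ (2 * Suc m)"
    proof -
      have hx: "?h x = ?Q x * inverse x ^ (2 * m)" using ih x by simp
      have h1x: "deriv ?h x = ?h1 x" using dh x by simp
      have i1: "inverse x ^ Suc (2 * m) = inverse x ^ (2 * m) / x" by (simp add: divide_inverse)
      have i2: "inverse x ^ Suc (Suc (2 * m)) = inverse x ^ (2 * m) / x ^ 2"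
        by (simp add: divide_inverse power2_eq_square)
      have i3: "1 / x ^ (2 * Suc m) = inverse x ^ (2 * m) / x ^ 2"
        by (simp add: divide_inverse power2_eq_square power_inverse)
      have "E ?c (E ?d ?Q) x / x ^ (2 * Suc m) = E ?c (E ?d ?Q) x * (1 / x ^ (2 * Suc m))" by simp
      also have "\<dots> = deriv (deriv ?h) x + (2 * real \<alpha> + 1) / x * deriv ?h x - (4 * real \<alpha> + 4) / x ^ 2 * ?h x"
      proof -
        define u where "u = inverse x ^ (2 * m)"
        show ?thesis unfolding i3 ddh ee hx h1x i1 i2 u_def[symmetric] using x by (simp add: field_simps power2_eq_square)
      qed
      finally show ?thesis by simp
    qed
    finally show "(Bop \<alpha> ^^ Suc m) y x = P (BL \<alpha> (Suc m)) y x / x ^ (2 * Suc m)" by simp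
  qed
qed



lemma Ck_of_derivs: "(\<forall>j<n. \<forall>x>0. (deriv ^^ j) g differentiable (at x)) \<Longrightarrow> Ck n g"
proof (induction n arbitrary: g)
  case 0 then show ?case by simp
next
  case (Suc n)
  have a: "\<forall>x>0. g differentiable (at x)" using Suc.prems[rule_format, of 0] by simp
  have "\<forall>j<n. \<forall>x>0. (deriv ^^ j) (deriv g) differentiable (at x)"
  proof (intro allI impI)
    fix j x assume "j < n" "(x::real) > 0"
    then have "(deriv ^^ Suc j) g differentiable (at x)" using Suc.prems[rule_format, of "Suc j" x] by blast
    moreover have "(deriv ^^ Suc j) g = (deriv ^^ j) (deriv g)" by (simp only: funpow_Suc_right o_def)
    ultimately show "(deriv ^^ j) (deriv g) differentiable (at x)" by simp
  qed
  then show ?case using a Suc.IH by simp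
qed

lemma Cn_Ck: "Cn_on n {0<..} y \<Longrightarrow> Ck n y"
  unfolding Cn_on_def by (intro Ck_of_derivs) (auto simp: real_differentiable_def)

lemma TL_eq: "TL m = rev (map (\<lambda>j. 2 * real j) [0..<m])"
  by (induction m) auto

lemma mset_BL: "mset (BL a m) = mset (map (\<lambda>j. 2 * real j - 2 * real a - 2) [0..<m]) + mset (map (\<lambda>j. 2 * real j + 2) [0..<m])"
  by (induction m) auto

lemma mset_eq: "mset (BL a (a + 2)) = mset (map (\<lambda>c. c - real (2 * a + 2)) (TL (2 * a + 4)))"
proof -
  have u: "[0..<2 * a + 4] = [0..<a + 2] @ map (\<lambda>i. i + (a + 2)) [0..<a + 2]"
  proof -
    have e: "2 * a + 4 = (a + 2) + (a + 2)" by simp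
    show ?thesis unfolding e upt_add_eq_append[of 0 "a + 2" "a + 2", OF le0] map_add_upt by simp
  qed
  have 1: "map (\<lambda>c. c - real (2 * a + 2)) (map (\<lambda>j. 2 * real j) [0..<a + 2]) = map (\<lambda>j. 2 * real j - 2 * real a - 2) [0..<a + 2]"
    by simp
  have 2: "map (\<lambda>c. c - real (2 * a + 2)) (map (\<lambda>j. 2 * real j) (map (\<lambda>i. i + (a + 2)) [0..<a + 2])) = map (\<lambda>j. 2 * real j + 2) [0..<a + 2]"
    by (simp add: algebra_simps)
  have "mset (map (\<lambda>c. c - real (2 * a + 2)) (TL (2 * a + 4))) =
     mset (map (\<lambda>c. c - real (2 * a + 2)) (map (\<lambda>j. 2 * real j) [0..<a + 2])) +
     mset (map (\<lambda>c. c - real (2 * a + 2)) (map (\<lambda>j. 2 * real j) (map (\<lambda>i. i + (a + 2)) [0..<a + 2])))"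
    by (simp only: TL_eq u map_append rev_map[symmetric] mset_rev mset_append)
  then show ?thesis unfolding 1 2 mset_BL by simp
qed

lemma partA:
  assumes "Cn_on (2 * \<alpha> + 4) {0<..} y" "(x::real) > 0"
  shows "x ^ 2 * (xinvD ^^ (2 * \<alpha> + 4)) (\<lambda>t. t ^ (2 * \<alpha> + 2) * y t) x = (Bop \<alpha> ^^ (\<alpha> + 2)) y x"
proof -
  have y: "Ck (2 * \<alpha> + 4) y" by (rule Cn_Ck[OF assms(1)])
  have g: "Ck (2 * \<alpha> + 4) (\<lambda>t. t ^ (2 * \<alpha> + 2) * y t)" by (intro Ck_mult Ck_pow y)
  let ?cs = "map (\<lambda>c. c - real (2 * \<alpha> + 2)) (TL (2 * \<alpha> + 4))"
  have "x ^ 2 * (xinvD ^^ (2 * \<alpha> + 4)) (\<lambda>t. t ^ (2 * \<alpha> + 2) * y t) x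
      = x ^ 2 * (P (TL (2 * \<alpha> + 4)) (\<lambda>t. t ^ (2 * \<alpha> + 2) * y t) x / x ^ (2 * (2 * \<alpha> + 4)))"
    using T_pow[OF g] assms(2) by simp
  also have "\<dots> = x ^ 2 * (x ^ (2 * \<alpha> + 2) * P ?cs y x / x ^ (2 * (2 * \<alpha> + 4)))"
    using P_shift[of "TL (2 * \<alpha> + 4)" y "2 * \<alpha> + 2"] y assms(2) by simp
  also have "\<dots> = P ?cs y x / x ^ (2 * (\<alpha> + 2))"
  proof -
    have e: "x ^ (2 * (2 * \<alpha> + 4)) = x ^ 2 * x ^ (2 * \<alpha> + 2) * x ^ (2 * (\<alpha> + 2))"
    proof -
      have "2 * (2 * \<alpha> + 4) = 2 + (2 * \<alpha> + 2) + 2 * (\<alpha> + 2)" by simp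
      then show ?thesis by (simp only: power_add)
    qed
    show ?thesis unfolding e using assms(2) by (simp add: field_simps)
  qed
  also have "\<dots> = P (BL \<alpha> (\<alpha> + 2)) y x / x ^ (2 * (\<alpha> + 2))"
    using P_perm[OF mset_eq[symmetric], where g=y] y assms(2) by simp
  also have "\<dots> = (Bop \<alpha> ^^ (\<alpha> + 2)) y x"
  proof -
    have e: "2 * (\<alpha> + 2) = 2 * \<alpha> + 4" by simp
    show ?thesis by (rule sym[OF Bop_pow[OF y[folded e], rule_format, OF assms(2)]])
  qed
  finally show ?thesis .
qed



definition pser :: "(nat \<Rightarrow> real) \<Rightarrow> real \<Rightarrow> real" where
  "pser c z = (\<Sum>n. c n * z ^ n)"
definition entire :: "(nat \<Rightarrow> real) \<Rightarrow> bool" where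
  "entire c \<longleftrightarrow> (\<forall>z. summable (\<lambda>n. c n * z ^ n))"
definition ev :: "(nat \<Rightarrow> real) \<Rightarrow> real \<Rightarrow> real" where
  "ev c x = pser c (x ^ 2)"
definition shiftc :: "nat \<Rightarrow> (nat \<Rightarrow> real) \<Rightarrow> nat \<Rightarrow> real" where
  "shiftc m c k = (if k < m then 0 else c (k - m))"
definition D2 :: "(nat \<Rightarrow> real) \<Rightarrow> nat \<Rightarrow> real" where
  "D2 c = (\<lambda>k. 2 * diffs c k)"

lemma entire_diffs: "entire c \<Longrightarrow> entire (diffs c)"
  unfolding entire_def by (intro allI termdiff_converges_all) auto

lemma entire_scale: "entire c \<Longrightarrow> entire (\<lambda>n. a * c n)"
  unfolding entire_def by (auto simp: mult.assoc intro: summable_mult)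

lemma entire_add: "entire c \<Longrightarrow> entire d \<Longrightarrow> entire (\<lambda>n. c n + d n)"
  unfolding entire_def by (auto simp: distrib_right intro: summable_add)

lemma pser_sums: "entire c \<Longrightarrow> (\<lambda>n. c n * z ^ n) sums pser c z"
  unfolding entire_def pser_def by (intro summable_sums) auto

lemma pser_scale: "entire c \<Longrightarrow> pser (\<lambda>n. a * c n) z = a * pser c z"
  unfolding entire_def pser_def by (simp add: mult.assoc suminf_mult)

lemma pser_add: "entire c \<Longrightarrow> entire d \<Longrightarrow> pser (\<lambda>n. c n + d n) z = pser c z + pser d z"
  unfolding entire_def pser_def by (simp add: distrib_right suminf_add)

lemma pser_zero: "pser (\<lambda>n. 0) z = 0" by (simp add: pser_def)

lemma shift_sums:
  assumes "entire c" shows "(\<lambda>n. shiftc m c n * z ^ n) sums (z ^ m * pser c z)"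
proof -
  have "(\<lambda>n. z ^ m * (c n * z ^ n)) sums (z ^ m * pser c z)"
    using pser_sums[OF assms] by (rule sums_mult)
  moreover have "(\<lambda>n. shiftc m c (n + m) * z ^ (n + m)) = (\<lambda>n. z ^ m * (c n * z ^ n))"
    by (auto simp: shiftc_def power_add algebra_simps)
  ultimately have "(\<lambda>n. shiftc m c (n + m) * z ^ (n + m)) sums (z ^ m * pser c z)" by simp
  moreover have "(\<Sum>i<m. shiftc m c i * z ^ i) = 0" by (simp add: shiftc_def)
  ultimately show ?thesis using sums_iff_shift[of "\<lambda>n. shiftc m c n * z ^ n" m] by simp
qed

lemma entire_shift: "entire c \<Longrightarrow> entire (shiftc m c)"
  unfolding entire_def using shift_sums sums_summable entire_def by blast

lemma pser_shift: "entire c \<Longrightarrow> pser (shiftc m c) z = z ^ m * pser c z"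
  unfolding pser_def using shift_sums[of c m z] by (simp add: sums_iff pser_def)

lemma ev_eq: "ev c = (\<lambda>x. pser c (x ^ 2))" by (simp add: ev_def fun_eq_iff)

lemma ev_deriv:
  assumes "entire c" shows "(ev c has_real_derivative (2 * x * ev (diffs c) x)) (at x)"
proof -
  have d1: "((\<lambda>z. pser c z) has_real_derivative pser (diffs c) (x ^ 2)) (at (x ^ 2))"
    using assms unfolding entire_def pser_def by (intro termdiffs_strong_converges_everywhere) auto
  have d2: "((\<lambda>x. x ^ 2) has_real_derivative (real 2 * x ^ (2 - Suc 0))) (at x)" by (rule DERIV_pow)
  have "((\<lambda>x. pser c (x ^ 2)) has_real_derivative pser (diffs c) (x ^ 2) * (real 2 * x ^ (2 - Suc 0))) (at x)"
    by (rule DERIV_chain2[OF d1 d2])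
  then show ?thesis unfolding ev_eq by (simp add: mult_ac)
qed

lemma deriv_ev: "entire c \<Longrightarrow> deriv (ev c) = (\<lambda>x. 2 * x * ev (diffs c) x)"
  using ev_deriv DERIV_imp_deriv by (intro ext) blast

lemma entire_D2: "entire c \<Longrightarrow> entire (D2 c)"
  unfolding D2_def by (intro entire_scale entire_diffs)

lemma entire_D2_pow: "entire c \<Longrightarrow> entire ((D2 ^^ m) c)"
  by (induction m) (auto intro: entire_D2)

lemma xinvD_ev:
  assumes "entire c" shows "\<forall>x>0. (xinvD ^^ m) (ev c) x = ev ((D2 ^^ m) c) x"
proof (induction m)
  case 0 show ?case by simp
next
  case (Suc m)
  have e: "entire ((D2 ^^ m) c)" using assms by (rule entire_D2_pow)
  show ?case
  proof (intro allI impI)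
    fix x :: real assume x: "x > 0"
    have "(xinvD ^^ Suc m) (ev c) x = deriv ((xinvD ^^ m) (ev c)) x / x" by (simp add: xinvD_def)
    also have "\<dots> = deriv (ev ((D2 ^^ m) c)) x / x" using deriv_eq_on[OF Suc.IH x] by simp
    also have "\<dots> = 2 * ev (diffs ((D2 ^^ m) c)) x" using x by (simp add: deriv_ev[OF e])
    also have "\<dots> = ev ((D2 ^^ Suc m) c) x"
      using pser_scale[OF entire_diffs[OF e], of 2] by (simp add: ev_def D2_def)
    finally show "(xinvD ^^ Suc m) (ev c) x = ev ((D2 ^^ Suc m) c) x" .
  qed
qed

lemma D2_pow_eq: "(D2 ^^ m) c k = 2 ^ m * pochhammer (real k + 1) m * c (k + m)"
proof (induction m arbitrary: k)
  case 0 then show ?case by simp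
next
  case (Suc m)
  have "(D2 ^^ Suc m) c k = 2 * (of_nat (Suc k) * (D2 ^^ m) c (Suc k))"
    by (simp only: funpow.simps o_apply D2_def diffs_def)
  also have "\<dots> = 2 ^ Suc m * pochhammer (real k + 1) (Suc m) * c (k + Suc m)"
    unfolding Suc pochhammer_rec by (simp add: algebra_simps)
  finally show ?case .
qed

definition L2c :: "nat \<Rightarrow> (nat \<Rightarrow> real) \<Rightarrow> nat \<Rightarrow> real" where
  "L2c a c = (\<lambda>k. (4 * real a + 4) * diffs c k + shiftc 1 (\<lambda>k. 4 * diffs (diffs c) k) k)"

definition Hc :: "nat \<Rightarrow> (nat \<Rightarrow> real) \<Rightarrow> nat \<Rightarrow> real" where
  "Hc a c = (\<lambda>k. (-1) ^ (a + 1) * shiftc 1 ((D2 ^^ (2 * a + 4)) (shiftc (a + 1) c)) k)"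

lemma entire_L2c: "entire c \<Longrightarrow> entire (L2c a c)"
  unfolding L2c_def by (intro entire_add entire_scale entire_shift entire_diffs)

lemma entire_Hc: "entire c \<Longrightarrow> entire (Hc a c)"
  unfolding Hc_def by (intro entire_scale entire_shift entire_D2_pow)

lemma L2c_eq: "L2c a c k = 4 * (real k + 1) * (real k + real a + 1) * c (Suc k)"
  by (cases k) (simp_all add: L2c_def shiftc_def diffs_def algebra_simps)

lemma Hc_eq: "Hc a c k = (if k = 0 then 0 else
   (-1) ^ (a + 1) * 2 ^ (2 * a + 4) * pochhammer (real k) (2 * a + 4) * c (k + a + 2))"
proof (cases k)
  case 0 then show ?thesis by (simp add: Hc_def shiftc_def)
next
  case (Suc j)
  have n: "\<not> (j + (2 * a + 4) < a + 1)" by simp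
  have m: "j + (2 * a + 4) - (a + 1) = Suc j + a + 2" by simp
  have "shiftc (a + 1) c (j + (2 * a + 4)) = c (Suc j + a + 2)" by (simp only: shiftc_def n m if_False)
  then show ?thesis using Suc by (simp add: Hc_def shiftc_def D2_pow_eq add.commute)
qed

lemma L2_ev:
  assumes "entire c" "(x::real) \<noteq> 0"
  shows "L2 a (ev c) x = ev (L2c a c) x"
proof -
  have e1: "entire (diffs c)" and e2: "entire (diffs (diffs c))" using assms entire_diffs by blast+
  have dd: "deriv (deriv (ev c)) x = 2 * ev (diffs c) x + 2 * x * (2 * x * ev (diffs (diffs c)) x)"
  proof -
    have "((\<lambda>x. 2 * x * ev (diffs c) x) has_real_derivative
        (2 * ev (diffs c) x + 2 * x * (2 * x * ev (diffs (diffs c)) x))) (at x)"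
      using DERIV_mult[OF DERIV_cmult[OF DERIV_ident, of 2] ev_deriv[OF e1, of x]] by (simp add: algebra_simps)
    then show ?thesis unfolding deriv_ev[OF assms(1)] by (rule DERIV_imp_deriv)
  qed
  have "L2 a (ev c) x = (4 * real a + 4) * pser (diffs c) (x^2) + x^2 * (4 * pser (diffs (diffs c)) (x^2))"
    unfolding L2_def dd unfolding deriv_ev[OF assms(1)] using assms(2)
    by (simp add: ev_def field_simps power2_eq_square)
  also have "\<dots> = ev (L2c a c) x"
    unfolding L2c_def ev_def
    by (simp add: pser_add pser_scale pser_shift entire_scale entire_shift e1 e2)
  finally show ?thesis .
qed

lemma Lhigh_ev:
  assumes "entire c" "(x::real) > 0"
  shows "Lhigh a (ev c) x = ev (Hc a c) x"
proof -
  have es: "entire (shiftc (a + 1) c)" using assms(1) by (rule entire_shift)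
  have ed: "entire ((D2 ^^ (2 * a + 4)) (shiftc (a + 1) c))" using es by (rule entire_D2_pow)
  have f: "(\<lambda>t. t ^ (2 * a + 2) * ev c t) = ev (shiftc (a + 1) c)"
  proof (rule ext)
    fix t :: real
    have "2 * a + 2 = 2 * (a + 1)" by simp
    then have p: "t ^ (2 * a + 2) = (t ^ 2) ^ (a + 1)" by (simp only: power_mult)
    show "t ^ (2 * a + 2) * ev c t = ev (shiftc (a + 1) c) t"
      unfolding p ev_def pser_shift[OF assms(1)] ..
  qed
  have "Lhigh a (ev c) x = (-1) ^ (a + 1) * (x ^ 2 * ev ((D2 ^^ (2 * a + 4)) (shiftc (a + 1) c)) x)"
    unfolding Lhigh_def f using xinvD_ev[OF es] assms(2) by simp
  also have "\<dots> = (-1) ^ (a + 1) * pser (shiftc 1 ((D2 ^^ (2 * a + 4)) (shiftc (a + 1) c))) (x ^ 2)"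
    using pser_shift[OF ed, of 1 "x^2"] by (simp add: ev_def)
  also have "\<dots> = ev (Hc a c) x"
    unfolding Hc_def ev_def by (rule pser_scale[OF entire_shift[OF ed], symmetric])
  finally show ?thesis .
qed



lemma alg3: fixes sg V P Fn Fj W L F2 Fm :: real
  assumes "sg * V = - (L / P)" "P \<noteq> 0" "Fn \<noteq> 0" "Fj \<noteq> 0" "Fm \<noteq> 0"
  shows "sg * P * (Fn / Fj) * (W * V * F2 / (Fn * Fm)) + L * (W * F2 / (Fm * Fj)) = 0"
proof -
  have "sg * P * (Fn / Fj) * (W * V * F2 / (Fn * Fm)) = (sg * V) * (P * W * F2 / (Fj * Fm))"
    using assms by (simp add: field_simps)
  also have "\<dots> = - (L * (W * F2 / (Fm * Fj)))" unfolding assms(1) using assms by (simp add: field_simps)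
  finally show ?thesis by simp
qed

lemma alg2: fixes sg V P Fc Fj W L Fa Fb D J N :: real
  assumes "sg * V = - (L / P)" "P \<noteq> 0" "Fc \<noteq> 0" "Fj \<noteq> 0" "Fb \<noteq> 0" "D \<noteq> 0" "J \<noteq> 0"
  shows "sg * P * (N * Fc / Fj) * (W * V * Fa / (Fc * (D * Fb)))
     + L * (W * Fa / (Fb * (J * Fj)))
     = L * (W * ((D - N * J) * Fa) / (D * Fb * (J * Fj)))"
proof -
  have "sg * P * (N * Fc / Fj) * (W * V * Fa / (Fc * (D * Fb)))
      = (sg * V) * (P * N * W * Fa / (Fj * (D * Fb)))"
    using assms by (simp add: field_simps)
  also have "\<dots> = - (N * (L * W * Fa) / (Fj * (D * Fb)))"
    unfolding assms(1) using assms by (simp add: field_simps)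
  finally have 1: "sg * P * (N * Fc / Fj) * (W * V * Fa / (Fc * (D * Fb)))
      = - (N * (L * W * Fa) / (Fj * (D * Fb)))" .
  show ?thesis unfolding 1 using assms by (simp add: field_simps)
qed

definition aJ :: "real \<Rightarrow> real \<Rightarrow> nat \<Rightarrow> real" where
  "aJ g lam k = (-(lam^2)/4)^k / (pochhammer (g+1) k * fact k)"

lemma besselJ_ev: "besselJ g lam x = ev (aJ g lam) x"
proof -
  have "(- ((lam * x)^2) / 4)^k / (pochhammer (g+1) k * fact k) = aJ g lam k * (x^2)^k" for k
  proof -
    have e: "- ((lam * x)^2) / 4 = (-(lam^2)/4) * x^2" by (simp add: power_mult_distrib)
    have "(- ((lam * x)^2) / 4)^k = (-(lam^2)/4)^k * (x^2)^k" by (subst e) (simp only: power_mult_distrib)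
    then show ?thesis unfolding aJ_def by simp
  qed
  then show ?thesis unfolding besselJ_def hyp0F1_def ev_def pser_def by simp
qed

lemma poch_ge1: "(g::real) \<ge> 0 \<Longrightarrow> pochhammer (g + 1) k \<ge> 1"
proof (induction k)
  case 0 then show ?case by simp
next
  case (Suc k)
  have h: "1 \<le> g + 1 + real k" using Suc.prems by simp
  have IH: "1 \<le> pochhammer (g + 1) k" by (rule Suc.IH[OF Suc.prems])
  show ?case unfolding pochhammer_Suc using mult_mono[OF IH h order_trans[OF zero_le_one IH] zero_le_one] by simp
qed

lemma entire_aJ: assumes "g \<ge> 0" shows "entire (aJ g lam)"
  unfolding entire_def
proof
  fix z :: real
  let ?q = "\<bar>lam^2 / 4 * z\<bar>"
  show "summable (\<lambda>n. aJ g lam n * z ^ n)"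
  proof (rule summable_comparison_test[OF _ summable_exp[of ?q]], intro exI allI impI)
    fix n :: nat
    have P: "pochhammer (g + 1) n \<ge> 1" using poch_ge1[OF assms] .
    have F: "fact n \<ge> (1::real)" by simp
    have "norm (aJ g lam n * z ^ n) = ?q ^ n / (pochhammer (g + 1) n * fact n)"
      unfolding aJ_def using P F
      by (simp add: abs_mult power_abs abs_divide power_mult_distrib[symmetric])
    also have "\<dots> \<le> ?q ^ n / fact n"
      using P F by (intro divide_left_mono) (auto simp: mult_le_cancel_right1)
    also have "\<dots> = inverse (fact n) * ?q ^ n" by (simp add: field_simps)
    finally show "norm (aJ g lam n * z ^ n) \<le> inverse (fact n) * ?q ^ n" .
  qed
qed

lemma poch_fact: "pochhammer (real n + 1) k * fact n = (fact (n + k) :: real)"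
proof (induction k)
  case 0 then show ?case by simp
next
  case (Suc k)
  have "pochhammer (real n + 1) (Suc k) * fact n = (pochhammer (real n + 1) k * fact n) * (real n + 1 + real k)"
    unfolding pochhammer_Suc by (simp add: algebra_simps)
  also have "\<dots> = fact (n + Suc k)" unfolding Suc by (simp add: algebra_simps)
  finally show ?case .
qed

lemma aJ_fact: "aJ (real n) lam k = (-(lam^2)/4)^k * fact n / (fact (n + k) * fact k)"
proof -
  have p: "pochhammer (real n + 1) k = fact (n + k) / fact n" using poch_fact[of n k] by (simp add: field_simps)
  show ?thesis unfolding aJ_def p by (simp add: field_simps)
qed

lemma alg_rec: fixes A B P F w W :: real
  shows "A \<noteq> 0 \<Longrightarrow> B \<noteq> 0 \<Longrightarrow> P \<noteq> 0 \<Longrightarrow> F \<noteq> 0 \<Longrightarrow>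
    (w * W) / (P * A * (B * F)) * (A * B) = w * (W / (P * F))"
  by (simp add: field_simps)

lemma aJ_rec: assumes "g \<ge> 0"
  shows "aJ g lam (Suc k) * ((g + 1 + real k) * (1 + real k)) = (-(lam^2)/4) * aJ g lam k"
proof -
  have P: "pochhammer (g + 1) k \<noteq> 0" using poch_ge1[OF assms, of k] by simp
  have h: "g + 1 + real k \<noteq> 0" "1 + real k \<noteq> 0" using assms by arith+
  show ?thesis unfolding aJ_def pochhammer_Suc fact_Suc power_Suc of_nat_Suc
    by (rule alg_rec) (use P h in auto)
qed



definition kc :: "nat \<Rightarrow> real \<Rightarrow> nat \<Rightarrow> real" where
  "kc a lam = shiftc 1 (\<lambda>k. - kconst a lam * aJ (real a + 2) lam k)"

lemma kc_0 [simp]: "kc a lam 0 = 0" by (simp add: kc_def shiftc_def)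
lemma kc_Suc [simp]: "kc a lam (Suc n) = - kconst a lam * aJ (real a + 2) lam n" by (simp add: kc_def shiftc_def)

lemma entire_A: "entire (aJ (real a) lam)" by (rule entire_aJ) simp
lemma entire_C: "entire (aJ (real a + 2) lam)" by (rule entire_aJ) simp
lemma entire_kc: "entire (kc a lam)" unfolding kc_def by (intro entire_shift entire_scale entire_C)

lemma besselK_ev: "besselK a lam = ev (kc a lam)"
proof (rule ext)
  fix x :: real
  have "ev (kc a lam) x = (x^2)^1 * pser (\<lambda>k. - kconst a lam * aJ (real a + 2) lam k) (x^2)"
    unfolding kc_def ev_def by (rule pser_shift[OF entire_scale[OF entire_C]])
  also have "\<dots> = besselK a lam x"
    unfolding besselK_def besselJ_ev ev_def pser_scale[OF entire_C] by simp
  finally show "besselK a lam x = ev (kc a lam) x" ..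
qed

definition sJ :: "nat \<Rightarrow> real \<Rightarrow> real \<Rightarrow> nat \<Rightarrow> real" where
  "sJ a M lam = (\<lambda>k. aJ (real a) lam k + M * kc a lam k)"

lemma entire_sJ: "entire (sJ a M lam)"
  unfolding sJ_def by (intro entire_add entire_A entire_scale entire_kc)

lemma besselJM_ev: "besselJM a M lam = ev (sJ a M lam)"
proof (rule ext)
  fix x :: real
  show "besselJM a M lam x = ev (sJ a M lam) x"
    unfolding besselJM_def besselJ_ev besselK_ev sJ_def ev_def
      pser_add[OF entire_A entire_scale[OF entire_kc]] pser_scale[OF entire_kc] ..
qed

lemma ev_lin:
  assumes "entire p" "entire q" "entire r"
  shows "ev p x + u * ev q x + v * (ev r x + w * ev q x) = ev (\<lambda>k. p k + u * q k + v * (r k + w * q k)) x"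
proof -
  let ?z = "x^2"
  have "(\<lambda>n. p n * ?z^n + u * (q n * ?z^n) + v * (r n * ?z^n + w * (q n * ?z^n))) sums
      (pser p ?z + u * pser q ?z + v * (pser r ?z + w * pser q ?z))"
    by (intro sums_add sums_mult pser_sums assms)
  moreover have "(\<lambda>n. p n * ?z^n + u * (q n * ?z^n) + v * (r n * ?z^n + w * (q n * ?z^n)))
      = (\<lambda>n. (p n + u * q n + v * (r n + w * q n)) * ?z^n)"
    by (rule ext) (simp add: algebra_simps)
  ultimately have "(\<lambda>n. (p n + u * q n + v * (r n + w * q n)) * ?z^n) sums
      (pser p ?z + u * pser q ?z + v * (pser r ?z + w * pser q ?z))"
    by simp
  then show ?thesis unfolding ev_def by (simp add: sums_iff pser_def)
qed

lemma sgn_lemma: "(-1::real) ^ (a + 1) * (-1) ^ (a + 2) = -1"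
  by (induction a) auto

lemma sv: "(-1::real) ^ (a + 1) * (-(lam^2)/4) ^ (a + 2) = - (lam ^ (2*a+4) / 2 ^ (2*a+4))"
proof -
  have e: "2 * a + 4 = 2 * (a + 2)" by simp
  have "(-(lam^2)/4) ^ (a + 2) = (-(lam^2/4)) ^ (a + 2)" by simp
  also have "\<dots> = (-1) ^ (a + 2) * (lam^2/4) ^ (a + 2)" by (rule power_minus)
  also have "(lam^2/4) ^ (a + 2) = lam ^ (2*a+4) / 2 ^ (2*a+4)"
    unfolding e power_mult power_divide by simp
  finally have "(-(lam^2)/4) ^ (a + 2) = (-1) ^ (a + 2) * (lam ^ (2*a+4) / 2 ^ (2*a+4))" .
  then show ?thesis using sgn_lemma[of a] by (simp add: mult.assoc[symmetric])
qed

lemma K0: "4 * (real a + 1) * kconst a lam = lam ^ (2*a+4) / (2^(2*a+2) * fact (a+2))"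
proof -
  have e: "2*a+4 = (2*a+2)+2" by simp
  have "(2::real)^(2*a+4) = 2^(2*a+2) * 2^2" by (simp only: e power_add)
  then have p: "(lam/2)^(2*a+4) = lam^(2*a+4) / (2^(2*a+2) * 4)" by (simp add: power_divide)
  have g: "A \<noteq> 0 \<Longrightarrow> Q \<noteq> 0 \<Longrightarrow> F \<noteq> 0 \<Longrightarrow> 4 * A * ((L / (Q * 4)) / (A * F)) = L / (Q * F)"
    for A Q F L :: real by (simp add: field_simps)
  show ?thesis unfolding kconst_def p by (rule g) auto
qed



lemma Z1: "L2c a (aJ (real a) lam) k + lam^2 * aJ (real a) lam k = 0"
proof -
  have r: "aJ (real a) lam (Suc k) * ((real a + 1 + real k) * (1 + real k)) = (-(lam^2)/4) * aJ (real a) lam k"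
    by (rule aJ_rec) simp
  have "L2c a (aJ (real a) lam) k = 4 * (aJ (real a) lam (Suc k) * ((real a + 1 + real k) * (1 + real k)))"
    unfolding L2c_eq by (simp add: algebra_simps)
  also have "\<dots> = - (lam^2 * aJ (real a) lam k)" unfolding r by simp
  finally show ?thesis by simp
qed

lemma core3:
  "(-1) ^ (a + 1) * 2 ^ (2*a+4) * pochhammer (real (Suc j)) (2*a+4) * aJ (real a + 2) lam (j + a + 2)
   + lam ^ (2*a+4) * aJ (real a + 2) lam j = 0"
proof -
  define w where "w = -(lam^2)/4"
  define sg :: real where "sg = (-1) ^ (a + 1)"
  define V where "V = w ^ (a + 2)"
  define P :: real where "P = 2 ^ (2*a+4)"
  define Fn :: real where "Fn = fact (j + (2*a+4))"
  define Fj :: real where "Fj = fact j"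
  define W where "W = w ^ j"
  define L where "L = lam ^ (2*a+4)"
  define F2 :: real where "F2 = fact (a + 2)"
  define Fm :: real where "Fm = fact (j + a + 2)"
  have ra: "real a + 2 = real (a + 2)" by simp
  have p: "pochhammer (real (Suc j)) (2*a+4) = Fn / Fj"
    using poch_fact[of j "2*a+4"] unfolding Fn_def Fj_def by (simp add: field_simps)
  have c1: "aJ (real a + 2) lam (j + a + 2) = W * V * F2 / (Fn * Fm)"
  proof -
    have h1: "a + 2 + (j + a + 2) = j + (2*a+4)" by simp
    have h2: "(-(lam^2)/4) ^ (j + a + 2) = W * V" unfolding W_def V_def w_def
      by (simp only: power_add[symmetric] add.assoc)
    show ?thesis by (simp only: ra aJ_fact h1 h2 Fn_def[symmetric] Fm_def[symmetric] F2_def[symmetric])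
  qed
  have c2: "aJ (real a + 2) lam j = W * F2 / (Fm * Fj)"
  proof -
    have h: "a + 2 + j = j + a + 2" by simp
    show ?thesis by (simp only: ra aJ_fact h W_def[symmetric] w_def[symmetric] Fm_def[symmetric]
        F2_def[symmetric] Fj_def[symmetric])
  qed
  have s: "sg * V = - (L / P)" unfolding sg_def V_def L_def P_def w_def by (rule sv)
  have "sg * P * (Fn / Fj) * (W * V * F2 / (Fn * Fm)) + L * (W * F2 / (Fm * Fj)) = 0"
    by (rule alg3[OF s]) (auto simp: P_def Fn_def Fj_def Fm_def)
  then show ?thesis unfolding p c1 c2 by (simp add: sg_def P_def L_def)
qed

lemma Z3: "Hc a (kc a lam) k + lam ^ (2*a+4) * kc a lam k = 0"
proof (cases k)
  case 0 then show ?thesis by (simp add: Hc_eq)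
next
  case (Suc j)
  have e: "Suc j + a + 2 = Suc (j + a + 2)" by simp
  have "Hc a (kc a lam) k + lam ^ (2*a+4) * kc a lam k = - kconst a lam *
    ((-1) ^ (a + 1) * 2 ^ (2*a+4) * pochhammer (real (Suc j)) (2*a+4) * aJ (real a + 2) lam (j + a + 2)
     + lam ^ (2*a+4) * aJ (real a + 2) lam j)"
    unfolding Suc Hc_eq e by (simp add: algebra_simps)
  then show ?thesis using core3[of a j lam] by simp
qed

lemma M1: "L2c a (kc a lam) (Suc j) + lam^2 * kc a lam (Suc j) = - (4 * (real a + 1) * kconst a lam) * aJ (real a + 2) lam (Suc j)"
proof -
  have r: "aJ (real a + 2) lam (Suc j) * ((real a + 2 + 1 + real j) * (1 + real j)) = (-(lam^2)/4) * aJ (real a + 2) lam j"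
    by (rule aJ_rec) simp
  have r2: "lam^2 * aJ (real a + 2) lam j = - 4 * (aJ (real a + 2) lam (Suc j) * ((real a + 2 + 1 + real j) * (1 + real j)))"
    unfolding r by simp
  have "L2c a (kc a lam) (Suc j) + lam^2 * kc a lam (Suc j) =
     - kconst a lam * (4 * (real (Suc j) + 1) * (real (Suc j) + real a + 1) * aJ (real a + 2) lam (Suc j)
       + lam^2 * aJ (real a + 2) lam j)"
    unfolding L2c_eq by (simp add: algebra_simps)
  also have "\<dots> = - (4 * (real a + 1) * kconst a lam) * aJ (real a + 2) lam (Suc j)"
    unfolding r2 by (simp add: algebra_simps)
  finally show ?thesis .
qed

lemma M2: "Hc a (aJ (real a) lam) (Suc j) + lam^(2*a+4) * aJ (real a) lam (Suc j)
   = lam^(2*a+4) * aJ (real a + 2) lam (Suc j)"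
proof -
  define w where "w = -(lam^2)/4"
  define sg :: real where "sg = (-1) ^ (a + 1)"
  define V where "V = w ^ (a + 2)"
  define P :: real where "P = 2 ^ (2*a+4)"
  define N :: real where "N = real j + 2 * real a + 4"
  define Fc :: real where "Fc = fact (j + 2*a + 3)"
  define Fj :: real where "Fj = fact j"
  define W where "W = w ^ Suc j"
  define L where "L = lam ^ (2*a+4)"
  define Fa :: real where "Fa = fact a"
  define Fb :: real where "Fb = fact (a + Suc j)"
  define D :: real where "D = (real a + real j + 3) * (real a + real j + 2)"
  define J :: real where "J = 1 + real j"
  have ra: "real a + 2 = real (a + 2)" by simp
  have f1: "fact (j + (2*a+4)) = N * Fc"
  proof -
    have "j + (2*a+4) = Suc (j + 2*a + 3)" by simp
    then have "fact (j + (2*a+4)) = (of_nat (Suc (j + 2*a + 3)) :: real) * fact (j + 2*a + 3)"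
      by (simp only: fact_Suc)
    then show ?thesis unfolding N_def Fc_def by simp
  qed
  have hP: "pochhammer (real (Suc j)) (2*a+4) = N * Fc / Fj"
    using poch_fact[of j "2*a+4"] unfolding f1 Fj_def by (simp add: field_simps)
  have fJ: "fact (Suc j) = J * Fj" unfolding J_def Fj_def by (simp add: fact_Suc)
  have fD: "fact (Suc j + a + 2) = D * Fb"
  proof -
    have "Suc j + a + 2 = Suc (Suc (a + Suc j))" by simp
    then have "fact (Suc j + a + 2) = (of_nat (Suc (Suc (a + Suc j))) :: real) * (of_nat (Suc (a + Suc j)) * fact (a + Suc j))"
      by (simp only: fact_Suc)
    then show ?thesis unfolding D_def Fb_def by (simp add: algebra_simps)
  qed
  have hA1: "aJ (real a) lam (Suc j) = W * Fa / (Fb * (J * Fj))"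
    unfolding aJ_fact fJ W_def w_def Fa_def Fb_def ..
  have hA2: "aJ (real a) lam (Suc j + a + 2) = W * V * Fa / (Fc * (D * Fb))"
  proof -
    have g1: "a + (Suc j + a + 2) = j + 2*a + 3" by simp
    have g3: "(-(lam^2)/4) ^ (Suc j + a + 2) = W * V" unfolding W_def V_def w_def
      by (simp only: power_add[symmetric] add.assoc)
    show ?thesis by (simp only: aJ_fact g1 g3 fD Fc_def[symmetric] Fa_def[symmetric])
  qed
  have hC: "aJ (real a + 2) lam (Suc j) = W * ((D - N * J) * Fa) / (D * Fb * (J * Fj))"
  proof -
    have g1: "a + 2 + Suc j = Suc j + a + 2" by simp
    have g2: "fact (a + 2) = (real a + 2) * (real a + 1) * Fa"
    proof -
      have "a + 2 = Suc (Suc a)" by simp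
      then have "fact (a + 2) = (of_nat (Suc (Suc a)) :: real) * (of_nat (Suc a) * fact a)"
        by (simp only: fact_Suc)
      then show ?thesis unfolding Fa_def by (simp add: algebra_simps)
    qed
    have g3: "(real a + 2) * (real a + 1) = D - N * J"
      unfolding D_def N_def J_def by (simp add: algebra_simps)
    have "aJ (real a + 2) lam (Suc j) = W * ((real a + 2) * (real a + 1) * Fa) / (D * Fb * (J * Fj))"
      by (simp only: ra aJ_fact g1 fD fJ g2 W_def[symmetric] w_def[symmetric])
    then show ?thesis unfolding g3 .
  qed
  have s: "sg * V = - (L / P)" unfolding sg_def V_def L_def P_def w_def by (rule sv)
  have nz: "P \<noteq> 0" "Fc \<noteq> 0" "Fj \<noteq> 0" "Fb \<noteq> 0" "D \<noteq> 0" "J \<noteq> 0"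
    unfolding P_def Fc_def Fj_def Fb_def D_def J_def by (auto simp: add_nonneg_eq_0_iff)
  have "Hc a (aJ (real a) lam) (Suc j) + lam^(2*a+4) * aJ (real a) lam (Suc j)
      = sg * P * (N * Fc / Fj) * (W * V * Fa / (Fc * (D * Fb))) + L * (W * Fa / (Fb * (J * Fj)))"
    unfolding Hc_eq hP hA1 hA2 by (simp add: sg_def P_def L_def)
  also have "\<dots> = L * (W * ((D - N * J) * Fa) / (D * Fb * (J * Fj)))"
    by (rule alg2[OF s nz])
  also have "\<dots> = lam^(2*a+4) * aJ (real a + 2) lam (Suc j)"
    unfolding hC L_def ..
  finally show ?thesis .
qed

lemma Z2: "L2c a (kc a lam) k + lam^2 * kc a lam k
   + (1 / (2^(2*a+2) * fact (a+2))) * (Hc a (aJ (real a) lam) k + lam^(2*a+4) * aJ (real a) lam k) = 0"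
proof (cases k)
  case 0
  have c0: "aJ g lam 0 = 1" for g by (simp add: aJ_def)
  have "L2c a (kc a lam) k + lam^2 * kc a lam k
   + (1 / (2^(2*a+2) * fact (a+2))) * (Hc a (aJ (real a) lam) k + lam^(2*a+4) * aJ (real a) lam k)
   = - (4 * (real a + 1) * kconst a lam) + lam^(2*a+4) / (2^(2*a+2) * fact (a+2))"
    unfolding 0 L2c_eq Hc_eq by (simp add: c0 algebra_simps)
  then show ?thesis unfolding K0 by simp
next
  case (Suc j)
  have "L2c a (kc a lam) k + lam^2 * kc a lam k
   + (1 / (2^(2*a+2) * fact (a+2))) * (Hc a (aJ (real a) lam) k + lam^(2*a+4) * aJ (real a) lam k)
   = (- (4 * (real a + 1) * kconst a lam) + lam^(2*a+4) / (2^(2*a+2) * fact (a+2))) * aJ (real a + 2) lam (Suc j)"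
    unfolding Suc M1 M2 by (simp add: algebra_simps)
  then show ?thesis unfolding K0 by simp
qed



lemma partC:
  assumes "(x::real) > 0"
  shows "Lhigh \<alpha> (besselK \<alpha> lam) x + lam ^ (2 * \<alpha> + 4) * besselK \<alpha> lam x = 0"
proof -
  have "Lhigh \<alpha> (besselK \<alpha> lam) x + lam ^ (2 * \<alpha> + 4) * besselK \<alpha> lam x
      = ev (Hc \<alpha> (kc \<alpha> lam)) x + lam ^ (2 * \<alpha> + 4) * ev (kc \<alpha> lam) x + 0 * (ev (kc \<alpha> lam) x + 0 * ev (kc \<alpha> lam) x)"
    unfolding besselK_ev Lhigh_ev[OF entire_kc assms] by simp
  also have "\<dots> = ev (\<lambda>k. Hc \<alpha> (kc \<alpha> lam) k + lam ^ (2 * \<alpha> + 4) * kc \<alpha> lam k + 0 * (kc \<alpha> lam k + 0 * kc \<alpha> lam k)) x"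
    by (rule ev_lin[OF entire_Hc[OF entire_kc] entire_kc entire_kc])
  also have "(\<lambda>k. Hc \<alpha> (kc \<alpha> lam) k + lam ^ (2 * \<alpha> + 4) * kc \<alpha> lam k + 0 * (kc \<alpha> lam k + 0 * kc \<alpha> lam k)) = (\<lambda>k. 0)"
    using Z3 by simp
  finally show ?thesis by (simp add: ev_def pser_zero)
qed

lemma partB:
  assumes "(x::real) > 0"
  shows "(L2 \<alpha> (besselJM \<alpha> M lam) x + lam ^ 2 * besselJM \<alpha> M lam x)
            + M / (2 ^ (2 * \<alpha> + 2) * fact (\<alpha> + 2)) *
              (Lhigh \<alpha> (besselJM \<alpha> M lam) x + lam ^ (2 * \<alpha> + 4) * besselJM \<alpha> M lam x) = 0"
proof -
  let ?s = "sJ \<alpha> M lam"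
  let ?c = "M / (2 ^ (2 * \<alpha> + 2) * fact (\<alpha> + 2))"
  let ?cz = "1 / (2 ^ (2 * \<alpha> + 2) * fact (\<alpha> + 2)) :: real"
  let ?A = "aJ (real \<alpha>) lam"
  let ?K = "kc \<alpha> lam"
  have nz: "x \<noteq> 0" using assms by simp
  have "(L2 \<alpha> (besselJM \<alpha> M lam) x + lam ^ 2 * besselJM \<alpha> M lam x)
            + ?c * (Lhigh \<alpha> (besselJM \<alpha> M lam) x + lam ^ (2 * \<alpha> + 4) * besselJM \<alpha> M lam x)
      = ev (L2c \<alpha> ?s) x + lam ^ 2 * ev ?s x + ?c * (ev (Hc \<alpha> ?s) x + lam ^ (2 * \<alpha> + 4) * ev ?s x)"
    using assms unfolding besselJM_ev L2_ev[OF entire_sJ nz] Lhigh_ev[OF entire_sJ assms] using assms by simp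
  also have "\<dots> = ev (\<lambda>k. L2c \<alpha> ?s k + lam ^ 2 * ?s k + ?c * (Hc \<alpha> ?s k + lam ^ (2 * \<alpha> + 4) * ?s k)) x"
    by (rule ev_lin[OF entire_L2c[OF entire_sJ] entire_sJ entire_Hc[OF entire_sJ]])
  also have "(\<lambda>k. L2c \<alpha> ?s k + lam ^ 2 * ?s k + ?c * (Hc \<alpha> ?s k + lam ^ (2 * \<alpha> + 4) * ?s k)) = (\<lambda>k. 0)"
  proof (rule ext)
    fix k
    have lL: "L2c \<alpha> ?s k = L2c \<alpha> ?A k + M * L2c \<alpha> ?K k" by (simp add: L2c_eq sJ_def algebra_simps)
    have lH: "Hc \<alpha> ?s k = Hc \<alpha> ?A k + M * Hc \<alpha> ?K k" by (simp add: Hc_eq sJ_def algebra_simps)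
    define cz :: real where "cz = 1 / (2 ^ (2 * \<alpha> + 2) * fact (\<alpha> + 2))"
    have c: "?c = M * cz" unfolding cz_def by (simp only: times_divide_eq_right mult_1_right)
    have "L2c \<alpha> ?s k + lam ^ 2 * ?s k + ?c * (Hc \<alpha> ?s k + lam ^ (2 * \<alpha> + 4) * ?s k)
       = (L2c \<alpha> ?A k + lam^2 * ?A k)
         + M * (L2c \<alpha> ?K k + lam^2 * ?K k + cz * (Hc \<alpha> ?A k + lam^(2*\<alpha>+4) * ?A k))
         + M * M * cz * (Hc \<alpha> ?K k + lam ^ (2*\<alpha>+4) * ?K k)"
      unfolding lL lH c by (simp add: sJ_def algebra_simps)
    also have "\<dots> = 0" unfolding cz_def Z1 Z2 Z3 by simp
    finally show "L2c \<alpha> ?s k + lam ^ 2 * ?s k + ?c * (Hc \<alpha> ?s k + lam ^ (2 * \<alpha> + 4) * ?s k) = 0" .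
  qed
  finally show ?thesis by (simp add: ev_def pser_zero)
qed

theorem theorem5p1:
  fixes \<alpha> :: nat and M :: real
  assumes "M \<ge> 0"
  shows "(\<forall>y. Cn_on (2 * \<alpha> + 4) {0<..} y \<longrightarrow>
            (\<forall>x>0. x ^ 2 * (xinvD ^^ (2 * \<alpha> + 4)) (\<lambda>t. t ^ (2 * \<alpha> + 2) * y t) x
                   = (Bop \<alpha> ^^ (\<alpha> + 2)) y x))
       \<and> (\<forall>lam\<ge>0. \<forall>x>0.
            (L2 \<alpha> (besselJM \<alpha> M lam) x + lam ^ 2 * besselJM \<alpha> M lam x)
            + M / (2 ^ (2 * \<alpha> + 2) * fact (\<alpha> + 2)) *
              (Lhigh \<alpha> (besselJM \<alpha> M lam) x + lam ^ (2 * \<alpha> + 4) * besselJM \<alpha> M lam x) = 0)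
       \<and> (\<forall>lam\<ge>0. \<forall>x>0.
            Lhigh \<alpha> (besselK \<alpha> lam) x + lam ^ (2 * \<alpha> + 4) * besselK \<alpha> lam x = 0)"
  using partA partB partC by blast

end
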